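(* Let $J$ be a lex-segment ideal in $R=k[x_1,x_2,x_3]$ with $\dim_k (R/J)_i=h_i$ for every $i\ge 0$. Then for every $i\ge0$, $$\dim_k\left((J:x_3)/J\right)_{i}=h_{i}-h_{i+1}+(h_{i+1})^{-}.$$
   Context: A lex-segment ideal $J$ is a monomial ideal such that for each degree $t$, $J_t$ is spanned by the $\dim_k J_t$ largest monomials of degree $t$ in the lexicographic order with $x_1>x_2>x_3$. For positive integers $h,i$ write uniquely $h=\binom{m_i}{i}+\binom{m_{i-1}}{i-1}+\cdots+\binom{m_j}{j}$ with $m_i>\cdots>m_j\ge j\ge1$, and set $(h)^-=\binom{m_i-1}{i}+\cdots+\binom{m_j-1}{j}$; $(h_{i+1})^-$ is computed with respect to $i+1$, and $(0)^-=0$. *)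

theory Defs
  imports Main
begin

text \<open>Monomials of k[x1,x2,x3] are represented by their exponent vectors (a1,a2,a3).
A monomial ideal is represented by the set of monomials it contains (which form a
k-basis of it); dimensions over k of graded pieces are cardinalities of monomial sets.\<close>

type_synonym mon = "nat \<times> nat \<times> nat"

definition mdeg :: "mon \<Rightarrow> nat" where
  "mdeg m = (case m of (a, b, c) \<Rightarrow> a + b + c)"

definition mmul :: "mon \<Rightarrow> mon \<Rightarrow> mon" where
  "mmul m n = (case m of (a, b, c) \<Rightarrow> case n of (a', b', c') \<Rightarrow> (a + a', b + b', c + c'))"

definition x3 :: mon where "x3 = (0, 0, 1)"

definition mons_deg :: "nat \<Rightarrow> mon set" where
  "mons_deg t = {m. mdeg m = t}"

definition monomial_ideal :: "mon set \<Rightarrow> bool" where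
  "monomial_ideal J \<longleftrightarrow> (\<forall>m\<in>J. \<forall>n. mmul m n \<in> J)"

definition lex_gt :: "mon \<Rightarrow> mon \<Rightarrow> bool" where
  "lex_gt m n = (case m of (a, b, c) \<Rightarrow> case n of (a', b', c') \<Rightarrow>
      a > a' \<or> (a = a' \<and> b > b') \<or> (a = a' \<and> b = b' \<and> c > c'))"

definition lex_segment_ideal :: "mon set \<Rightarrow> bool" where
  "lex_segment_ideal J \<longleftrightarrow> monomial_ideal J \<and>
     (\<forall>t. J \<inter> mons_deg t =
        {m \<in> mons_deg t. card {n \<in> mons_deg t. lex_gt n m} < card (J \<inter> mons_deg t)})"

text \<open>Macaulay representation of h with respect to i:
  h = C(m_i,i) + C(m_{i-1},i-1) + ... + C(m_j,j), m_i > ... > m_j >= j >= 1.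
  The list ms = [m_i, m_{i-1}, ..., m_j]; entry k carries index i - k.\<close>
definition macaulay_rep :: "nat \<Rightarrow> nat \<Rightarrow> nat list \<Rightarrow> bool" where
  "macaulay_rep i h ms \<longleftrightarrow> ms \<noteq> [] \<and> length ms \<le> i \<and>
     sorted_wrt (>) ms \<and> last ms \<ge> i + 1 - length ms \<and>
     h = (\<Sum>k<length ms. (ms ! k) choose (i - k))"

definition macaulay_minus :: "nat \<Rightarrow> nat \<Rightarrow> nat" where
  "macaulay_minus i h = (if h = 0 then 0 else
     (let ms = (THE ms. macaulay_rep i h ms) in
        \<Sum>k<length ms. (ms ! k - 1) choose (i - k)))"

end

theory Submission imports Defs begin

definition valid :: "nat \<Rightarrow> nat list \<Rightarrow> bool" where
  "valid i ms \<longleftrightarrow> length ms \<le> i \<and> sorted_wrt (>) ms \<and> (ms \<noteq> [] \<longrightarrow> last ms \<ge> i + 1 - length ms)"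

definition msum :: "nat \<Rightarrow> nat list \<Rightarrow> nat" where
  "msum i ms = (\<Sum>k<length ms. (ms ! k) choose (i - k))"

lemma msum_Nil[simp]: "msum i [] = 0" by (simp add: msum_def)

lemma msum_Cons[simp]: "msum i (m # ms) = (m choose i) + msum (i - 1) ms"
proof -
  have e: "(\<Sum>k<length ms. (m # ms) ! Suc k choose (i - Suc k)) = (\<Sum>k<length ms. ms ! k choose (i - 1 - k))"
    by (rule sum.cong[OF refl]) (metis nth_Cons_Suc diff_Suc_eq_diff_pred)
  show ?thesis unfolding msum_def length_Cons sum.lessThan_Suc_shift e by simp
qed

lemma sorted_hd_last: "sorted_wrt (>) (m # ms) \<Longrightarrow> ms \<noteq> [] \<Longrightarrow> m \<ge> last ms + length ms"
proof (induction ms arbitrary: m)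
  case Nil then show ?case by simp
next
  case (Cons x xs)
  show ?case
  proof (cases "xs = []")
    case True then show ?thesis using Cons.prems by simp
  next
    case False
    have "x \<ge> last xs + length xs" using Cons False by simp
    moreover have "m > x" using Cons.prems by simp
    ultimately show ?thesis using False by simp
  qed
qed

lemma valid_Cons:
  assumes "valid i (m # ms)"
  shows "valid (i - 1) ms" "m \<ge> i" "i \<ge> 1"
proof -
  have L: "Suc (length ms) \<le> i" and S: "sorted_wrt (>) (m # ms)" and La: "last (m # ms) \<ge> i - length ms"
    using assms by (auto simp: valid_def)
  show "i \<ge> 1" using L by simp
  show "valid (i - 1) ms" using L S La by (auto simp: valid_def)
  show "m \<ge> i"
  proof (cases "ms = []")
    case True then show ?thesis using La by simp
  next
    case False
    then have "m \<ge> last ms + length ms" using S sorted_hd_last by blast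
    then show ?thesis using La False L by simp
  qed
qed

lemma msum_bound: "valid i (m # ms) \<Longrightarrow> msum i (m # ms) < Suc m choose i"
proof (induction ms arbitrary: m i)
  case Nil
  then have "m \<ge> i" "i \<ge> 1" using valid_Cons by blast+
  then obtain j where j: "i = Suc j" by (cases i) auto
  then have "m choose j > 0" using \<open>m \<ge> i\<close> by simp
  then show ?case using j by simp
next
  case (Cons x xs)
  have v: "valid (i - 1) (x # xs)" "m \<ge> i" "i \<ge> 1" using valid_Cons[OF Cons.prems] by blast+
  have "x < m" using Cons.prems by (simp add: valid_def)
  have "msum (i - 1) (x # xs) < Suc x choose (i - 1)" using Cons.IH v by blast
  also have "\<dots> \<le> m choose (i - 1)" using \<open>x < m\<close> binomial_right_mono by simp
  finally have "msum i (m # x # xs) < (m choose i) + (m choose (i - 1))" by simp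
  moreover obtain j where j: "i = Suc j" using v by (cases i) auto
  ultimately show ?case by simp
qed

lemma msum_unique: "valid i xs \<Longrightarrow> valid i ys \<Longrightarrow> msum i xs = msum i ys \<Longrightarrow> xs = ys"
proof (induction xs arbitrary: i ys)
  case Nil
  show ?case
  proof (cases ys)
    case (Cons y ys')
    then have "y \<ge> i" using valid_Cons Nil by blast
    then have "y choose i > 0" by simp
    then show ?thesis using Nil Cons by simp
  qed simp
next
  case (Cons m ms)
  have vm: "m \<ge> i" "valid (i - 1) ms" using valid_Cons[OF Cons.prems(1)] by blast+
  obtain y ys' where ys: "ys = y # ys'"
  proof (cases ys)
    case Nil
    then show ?thesis using Cons.prems vm by simp
  qed
  have vy: "y \<ge> i" "valid (i - 1) ys'" using valid_Cons Cons.prems(2) ys by blast+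
  have b1: "msum i (m # ms) < Suc m choose i" using msum_bound Cons.prems(1) by blast
  have b2: "msum i (y # ys') < Suc y choose i" using msum_bound Cons.prems(2) ys by blast
  have "m = y"
  proof (rule ccontr)
    assume "m \<noteq> y"
    then consider "Suc m \<le> y" | "Suc y \<le> m" by linarith
    then show False
    proof cases
      case 1
      then have "Suc m choose i \<le> y choose i" by (rule binomial_right_mono)
      then show False using b1 Cons.prems(3) ys by simp
    next
      case 2
      then have "Suc y choose i \<le> m choose i" by (rule binomial_right_mono)
      then show False using b2 Cons.prems(3) ys by simp
    qed
  qed
  then have "msum (i - 1) ms = msum (i - 1) ys'" using Cons.prems(3) ys by simp
  then show ?case using Cons.IH vm vy ys \<open>m = y\<close> by blast
qed

lemma macaulay_minus_eq:
  assumes "ms \<noteq> []" "valid i ms" "h = msum i ms" "h \<noteq> 0"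
  shows "macaulay_minus i h = (\<Sum>k<length ms. (ms ! k - 1) choose (i - k))"
proof -
  have rep: "macaulay_rep i h ms \<longleftrightarrow> ms \<noteq> [] \<and> valid i ms \<and> h = msum i ms" for ms
    by (auto simp: macaulay_rep_def valid_def msum_def)
  have "(THE ms. macaulay_rep i h ms) = ms"
    by (rule the_equality) (use assms rep msum_unique in auto)
  then show ?thesis using assms(4) by (simp add: macaulay_minus_def)
qed


lemma mem_mons_deg[simp]: "(a, b, c) \<in> mons_deg t \<longleftrightarrow> a + b + c = t"
  by (simp add: mons_deg_def mdeg_def)

lemma finite_mons_deg: "finite (mons_deg t)"
proof -
  have "mons_deg t \<subseteq> {0..t} \<times> {0..t} \<times> {0..t}"
    by (clarsimp simp: mons_deg_def mdeg_def split: prod.splits)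
  then show ?thesis by (rule finite_subset) auto
qed

definition F :: "nat \<Rightarrow> nat \<Rightarrow> nat" where "F d p = (\<Sum>k<p. d + 1 - k)"

lemma card_E:
  assumes "a \<le> d"
  shows "card {n \<in> mons_deg d. fst n = a} = d + 1 - a"
proof -
  have "{n \<in> mons_deg d. fst n = a} = (\<lambda>b. (a, b, d - a - b)) ` {..d - a}"
  proof (intro set_eqI iffI)
    fix n assume "n \<in> {n \<in> mons_deg d. fst n = a}"
    then obtain b c where "n = (a, b, c)" "a + b + c = d" by (cases n) auto
    then show "n \<in> (\<lambda>b. (a, b, d - a - b)) ` {..d - a}" by force
  next
    fix n assume "n \<in> (\<lambda>b. (a, b, d - a - b)) ` {..d - a}"
    then show "n \<in> {n \<in> mons_deg d. fst n = a}" using assms by auto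
  qed
  moreover have "inj_on (\<lambda>b. (a, b, d - a - b)) {..d - a}" by (auto simp: inj_on_def)
  ultimately show ?thesis using assms by (simp add: card_image)
qed

lemma card_G:
  assumes "a \<le> d"
  shows "card {n \<in> mons_deg d. fst n \<le> a} = F d (Suc a)"
  using assms
proof (induction a)
  case 0
  have "{n \<in> mons_deg d. fst n \<le> 0} = {n \<in> mons_deg d. fst n = 0}" by auto
  then show ?case using card_E[of 0 d] by (simp add: F_def)
next
  case (Suc a)
  have "{n \<in> mons_deg d. fst n \<le> Suc a} = {n \<in> mons_deg d. fst n \<le> a} \<union> {n \<in> mons_deg d. fst n = Suc a}"
    by auto
  moreover have "card (\<dots>) = card {n \<in> mons_deg d. fst n \<le> a} + card {n \<in> mons_deg d. fst n = Suc a}"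
    by (rule card_Un_disjoint) (auto intro: finite_subset[OF _ finite_mons_deg])
  ultimately show ?case using Suc card_E[of "Suc a" d] by (simp add: F_def)
qed

lemma down_closed_nat:
  fixes A :: "nat set"
  assumes "finite A" "\<And>a b. a \<in> A \<Longrightarrow> b < a \<Longrightarrow> b \<in> A"
  shows "A = {..<card A}"
proof (cases "A = {}")
  case False
  have "A = {..Max A}"
  proof (intro set_eqI iffI)
    fix x assume "x \<in> A" then show "x \<in> {..Max A}" using assms(1) by simp
  next
    fix x assume "x \<in> {..Max A}"
    then have "x \<le> Max A" by simp
    moreover have "Max A \<in> A" using assms(1) False by simp
    ultimately show "x \<in> A" using assms(2) by (cases "x = Max A") auto
  qed
  then show ?thesis by (metis card_atMost lessThan_Suc_atMost)
qed simp


lemma F_mono: "a \<le> b \<Longrightarrow> F d a \<le> F d b"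
  unfolding F_def by (rule sum_mono2) auto

lemma F_Suc: "F d (Suc p) = F d p + (d + 1 - p)"
  unfolding F_def by simp

lemma F_full: "F d (Suc d) = Suc (Suc d) choose d"
proof (induction d)
  case 0 then show ?case by (simp add: F_def)
next
  case (Suc d)
  have "F (Suc d) (Suc (Suc d)) = (d + 2) + (\<Sum>k<Suc d. Suc d + 1 - Suc k)"
    unfolding F_def by (subst sum.lessThan_Suc_shift) simp
  also have "(\<Sum>k<Suc d. Suc d + 1 - Suc k) = F d (Suc d)" unfolding F_def by simp
  finally show ?case using Suc by simp
qed

lemma sum_split_r:
  fixes g :: "nat \<Rightarrow> nat"
  assumes "\<And>k. p \<le> k \<Longrightarrow> k < p + r \<Longrightarrow> g k = b"
  shows "(\<Sum>k<p + r. g k) = (\<Sum>k<p. g k) + r * b"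
  using assms by (induction r) auto

lemma card_split:
  assumes "finite A"
  shows "card A = card {x \<in> A. P x} + card {x \<in> A. \<not> P x}"
proof -
  have "A = {x \<in> A. P x} \<union> {x \<in> A. \<not> P x}" by auto
  then have "card A = card ({x \<in> A. P x} \<union> {x \<in> A. \<not> P x})" by simp
  also have "\<dots> = card {x \<in> A. P x} + card {x \<in> A. \<not> P x}"
    by (rule card_Un_disjoint) (use assms in auto)
  finally show ?thesis .
qed

lemma nondiv_count:
  assumes lex: "lex_segment_ideal J" and d: "d \<ge> 1"
  shows "card {n \<in> mons_deg d - J. snd (snd n) = 0} = macaulay_minus d (card (mons_deg d - J))"
proof -
  define D where "D = mons_deg d"
  define N where "N = card (J \<inter> D)"
  define h where "h = card (D - J)"
  have finD: "finite D" unfolding D_def by (rule finite_mons_deg)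
  have cardD: "card D = N + h"
  proof -
    have "card D = card {x \<in> D. x \<in> J} + card {x \<in> D. x \<notin> J}" by (rule card_split[OF finD])
    moreover have "{x \<in> D. x \<in> J} = J \<inter> D" "{x \<in> D. x \<notin> J} = D - J" by auto
    ultimately show ?thesis unfolding N_def h_def by simp
  qed
  have seg: "J \<inter> D = {m \<in> D. card {n \<in> D. lex_gt n m} < N}"
    using lex unfolding lex_segment_ideal_def D_def N_def by blast
  have memS: "m \<in> D - J \<longleftrightarrow> card {n \<in> D. \<not> lex_gt n m} \<le> h" if "m \<in> D" for m
  proof -
    have c: "card D = card {n \<in> D. lex_gt n m} + card {n \<in> D. \<not> lex_gt n m}"
      by (rule card_split[OF finD])
    have "m \<in> D - J \<longleftrightarrow> \<not> (card {n \<in> D. lex_gt n m} < N)"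
      using seg that by blast
    then show ?thesis using c cardD by linarith
  qed
  have ya: "{n \<in> D. \<not> lex_gt n (a, d - a, 0)} = {n \<in> D. fst n \<le> a}" if "a \<le> d" for a
  proof (intro set_eqI iffI)
    fix n :: mon assume n: "n \<in> {n \<in> D. \<not> lex_gt n (a, d - a, 0)}"
    obtain a' b' c' where "n = (a', b', c')" by (cases n) auto
    then show "n \<in> {n \<in> D. fst n \<le> a}" using n that by (auto simp: D_def lex_gt_def)
  next
    fix n :: mon assume n: "n \<in> {n \<in> D. fst n \<le> a}"
    obtain a' b' c' where "n = (a', b', c')" by (cases n) auto
    then show "n \<in> {n \<in> D. \<not> lex_gt n (a, d - a, 0)}" using n that by (auto simp: D_def lex_gt_def)
  qed
  have yS: "(a, d - a, 0) \<in> D - J \<longleftrightarrow> F d (Suc a) \<le> h" if "a \<le> d" for a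
  proof -
    have "(a, d - a, 0) \<in> D" using that by (simp add: D_def)
    then show ?thesis using memS ya[OF that] card_G[OF that] by (simp add: D_def)
  qed
  define A where "A = {a. a \<le> d \<and> F d (Suc a) \<le> h}"
  have finA: "finite A" unfolding A_def by simp
  have setEq: "{n \<in> D - J. snd (snd n) = 0} = (\<lambda>a. (a, d - a, 0)) ` A"
  proof (intro set_eqI iffI)
    fix n :: mon assume n: "n \<in> {n \<in> D - J. snd (snd n) = 0}"
    obtain a b c where nn: "n = (a, b, c)" by (cases n) auto
    then have "c = 0" "a + b = d" using n by (auto simp: D_def)
    then have "n = (a, d - a, 0)" "a \<le> d" using nn by auto
    then show "n \<in> (\<lambda>a. (a, d - a, 0)) ` A" using n yS unfolding A_def by auto
  next
    fix n :: mon assume "n \<in> (\<lambda>a. (a, d - a, 0)) ` A"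
    then obtain a where "a \<in> A" "n = (a, d - a, 0)" by auto
    then show "n \<in> {n \<in> D - J. snd (snd n) = 0}" using yS unfolding A_def by auto
  qed
  have cardL: "card {n \<in> D - J. snd (snd n) = 0} = card A"
    unfolding setEq by (rule card_image) (auto simp: inj_on_def)
  define p where "p = card A"
  have Aeq: "A = {..<p}" unfolding p_def
  proof (rule down_closed_nat[OF finA])
    fix a b assume "a \<in> A" "b < a"
    then show "b \<in> A" unfolding A_def using F_mono[of "Suc b" "Suc a" d] by auto
  qed
  have pd: "p \<le> Suc d"
  proof -
    have "A \<subseteq> {..d}" unfolding A_def by auto
    then show ?thesis unfolding p_def using card_mono[of "{..d}" A] by simp
  qed
  have belowp: "F d (Suc a) \<le> h" if "a < p" for a using that Aeq unfolding A_def by auto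
  have abovep: "h < F d (Suc p)" if "p \<le> d"
  proof -
    have "p \<notin> A" using Aeq by auto
    then show ?thesis using that unfolding A_def by auto
  qed
  have Fp: "F d p \<le> h"
  proof (cases p)
    case 0 then show ?thesis by (simp add: F_def)
  next
    case (Suc q) then show ?thesis using belowp[of q] by simp
  qed
  have hmax: "h \<le> F d (Suc d)"
  proof -
    have "{n \<in> D. fst n \<le> d} = D" by (auto simp: D_def mons_deg_def mdeg_def split: prod.splits)
    then have "card D = F d (Suc d)" using card_G[of d d] by (simp add: D_def)
    then show ?thesis using cardD by simp
  qed
  have main: "macaulay_minus d h = p"
  proof (cases "h = 0")
    case True
    have "p = 0"
    proof (rule ccontr)
      assume "p \<noteq> 0"
      then have "F d (Suc 0) \<le> h" using belowp by simp
      then show False using True by (simp add: F_def)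
    qed
    then show ?thesis using True by (simp add: macaulay_minus_def)
  next
    case hpos: False
    show ?thesis
    proof (cases "h = F d (Suc d)")
      case True
      have pe: "p = Suc d"
      proof (rule ccontr)
        assume "p \<noteq> Suc d"
        then have "p \<le> d" using pd by simp
        then have "h < F d (Suc p)" by (rule abovep)
        moreover have "F d (Suc p) \<le> F d (Suc d)" using \<open>p \<le> d\<close> by (intro F_mono) simp
        ultimately show False using True by simp
      qed
      have "macaulay_minus d h = (\<Sum>k<length [Suc (Suc d)]. ([Suc (Suc d)] ! k - 1) choose (d - k))"
        by (rule macaulay_minus_eq) (use True F_full d hpos in \<open>auto simp: valid_def\<close>)
      then show ?thesis using pe by simp
    next
      case False
      then have hlt: "h < F d (Suc d)" using hmax by simp
      have pd': "p \<le> d"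
      proof (rule ccontr)
        assume "\<not> p \<le> d"
        then have "p = Suc d" using pd by simp
        then show False using Fp hlt by simp
      qed
      define r where "r = h - F d p"
      have hr: "h = F d p + r" using Fp unfolding r_def by simp
      have rb: "p + r \<le> d" using abovep[OF pd'] hr F_Suc[of d p] pd' by simp
      define f where "f k = (if k < p then d + 1 - k else d - k)" for k
      define ms where "ms = map f [0..<p + r]"
      have len: "length ms = p + r" unfolding ms_def by simp
      have nth: "ms ! k = f k" if "k < p + r" for k using that unfolding ms_def by simp
      have ne: "ms \<noteq> []"
      proof
        assume "ms = []"
        then have "p = 0" "r = 0" using len by auto
        then show False using hr hpos by (simp add: F_def)
      qed
      have sorted: "sorted_wrt (>) ms"
        unfolding sorted_wrt_iff_nth_less len
        using rb by (auto simp: nth f_def)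
      have lastge: "last ms \<ge> d + 1 - length ms"
      proof -
        have pr: "p + r > 0" using ne len by auto
        then have "last ms = f (p + r - 1)" using ne by (simp add: last_conv_nth len nth)
        then show ?thesis using rb pr by (auto simp: f_def len)
      qed
      have v: "valid d ms" using len rb sorted lastge by (simp add: valid_def)
      have ms_sum: "msum d ms = h"
      proof -
        have "msum d ms = (\<Sum>k<p + r. f k choose (d - k))" unfolding msum_def len
          by (rule sum.cong) (auto simp: nth)
        also have "\<dots> = (\<Sum>k<p. f k choose (d - k)) + r * 1"
          by (rule sum_split_r) (use rb in \<open>auto simp: f_def\<close>)
        also have "(\<Sum>k<p. f k choose (d - k)) = F d p"
          unfolding F_def
        proof (rule sum.cong)
          fix k assume "k \<in> {..<p}"
          then have "k < p" "k \<le> d" using pd' by auto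
          then have "f k = Suc (d - k)" "d + 1 - k = Suc (d - k)" by (auto simp: f_def)
          then show "f k choose (d - k) = d + 1 - k" by simp
        qed simp
        finally show ?thesis using hr by simp
      qed
      have "macaulay_minus d h = (\<Sum>k<length ms. (ms ! k - 1) choose (d - k))"
        by (rule macaulay_minus_eq) (use ne v ms_sum hpos in auto)
      also have "\<dots> = (\<Sum>k<p + r. (f k - 1) choose (d - k))" unfolding len
        by (rule sum.cong) (auto simp: nth)
      also have "\<dots> = (\<Sum>k<p. (f k - 1) choose (d - k)) + r * 0"
        by (rule sum_split_r) (use rb in \<open>auto simp: f_def\<close>)
      also have "(\<Sum>k<p. (f k - 1) choose (d - k)) = (\<Sum>k<p. 1)"
      proof (rule sum.cong)
        fix k assume "k \<in> {..<p}"
        then have "k < p" "k \<le> d" using pd' by auto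
        then have "f k - 1 = d - k" by (auto simp: f_def)
        then show "(f k - 1) choose (d - k) = 1" by simp
      qed simp
      finally show ?thesis by simp
    qed
  qed
  show ?thesis using cardL main unfolding p_def h_def D_def by simp
qed

theorem lemma4p2:
  fixes J :: "mon set" and h :: "nat \<Rightarrow> nat"
  assumes "lex_segment_ideal J"
    and "\<And>i. h i = card (mons_deg i - J)"
  shows "int (card {m \<in> mons_deg i. mmul m x3 \<in> J \<and> m \<notin> J})
           = int (h i) - int (h (i + 1)) + int (macaulay_minus (i + 1) (h (i + 1)))"
proof -
  have mi: "monomial_ideal J" using assms(1) by (simp add: lex_segment_ideal_def)
  define X where "X = {m \<in> mons_deg i. mmul m x3 \<in> J \<and> m \<notin> J}"
  define Y where "Y = {m \<in> mons_deg i. mmul m x3 \<notin> J}"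
  define P where "P = {n \<in> mons_deg (Suc i) - J. snd (snd n) \<noteq> 0}"
  define Q where "Q = {n \<in> mons_deg (Suc i) - J. snd (snd n) = 0}"
  have fin: "finite (mons_deg t)" for t by (rule finite_mons_deg)
  have mJ: "mmul m x3 \<in> J" if "m \<in> J" for m using mi that unfolding monomial_ideal_def by blast
  have "mons_deg i - J = X \<union> Y"
    unfolding X_def Y_def using mJ by blast
  moreover have "X \<inter> Y = {}" unfolding X_def Y_def by auto
  moreover have "finite X" "finite Y" unfolding X_def Y_def using fin by auto
  ultimately have hi: "h i = card X + card Y" using assms(2) by (simp add: card_Un_disjoint)
  have "mons_deg (Suc i) - J = {n \<in> mons_deg (Suc i) - J. snd (snd n) \<noteq> 0} \<union> Q" unfolding Q_def by auto
  then have hs: "h (Suc i) = card P + card Q"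
    using assms(2) card_split[OF finite_Diff[OF fin], of "Suc i" J "\<lambda>n. snd (snd n) \<noteq> 0"]
    unfolding P_def Q_def by simp
  have YP: "card Y = card P"
  proof -
    have inj: "inj_on (\<lambda>m. mmul m x3) Y"
      by (auto simp: inj_on_def mmul_def x3_def split: prod.splits)
    have "(\<lambda>m. mmul m x3) ` Y = P"
    proof (intro set_eqI iffI)
      fix n assume "n \<in> (\<lambda>m. mmul m x3) ` Y"
      then obtain m where m: "m \<in> Y" "n = mmul m x3" by auto
      obtain a b c where "m = (a, b, c)" by (cases m) auto
      then show "n \<in> P" using m unfolding Y_def P_def by (auto simp: mmul_def x3_def)
    next
      fix n assume n: "n \<in> P"
      obtain a b c where nn: "n = (a, b, c)" by (cases n) auto
      then have "c \<noteq> 0" using n unfolding P_def by auto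
      then obtain c' where c: "c = Suc c'" by (cases c) auto
      have "n = mmul (a, b, c') x3" using nn c by (simp add: mmul_def x3_def)
      moreover have "(a, b, c') \<in> Y" using n nn c unfolding P_def Y_def by (auto simp: mmul_def x3_def)
      ultimately show "n \<in> (\<lambda>m. mmul m x3) ` Y" by blast
    qed
    then show ?thesis using card_image[OF inj] by simp
  qed
  have "card Q = macaulay_minus (Suc i) (h (Suc i))"
    using nondiv_count[OF assms(1), of "Suc i"] assms(2) unfolding Q_def by simp
  then show ?thesis using hi hs YP unfolding X_def by simp
qed

end
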